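(* Let $q\ge 2$, $n\ge1$, $d\ge 2$ be integers and $\boldsymbol{x}\neq\boldsymbol{y}\in\Sigma_q^n$. Then $d_H(\mathcal{R}(\boldsymbol{x}),\mathcal{R}(\boldsymbol{y}))=d$ if and only if there exist integers $s\ge 0$ and $t_1,\dots,t_{s+1}\ge 1$, sequences $\boldsymbol{u},\boldsymbol{w},\boldsymbol{v}_1,\dots,\boldsymbol{v}_s\in\Sigma_q^{\ge0}$, and symbols $a_1,\dots,a_{s+1},b_1,\dots,b_{s+1}\in\Sigma_q$ with $a_i\ne b_i$ for all $i\in[1,s+1]$, such that $$\boldsymbol{x}=(\boldsymbol{u},(\boldsymbol{\alpha}_{t_1}(a_1b_1),\boldsymbol{v}_1),\dots,(\boldsymbol{\alpha}_{t_s}(a_sb_s),\boldsymbol{v}_s),\boldsymbol{\alpha}_{t_{s+1}}(a_{s+1}b_{s+1}),\boldsymbol{w}),$$ $$\boldsymbol{y}=(\boldsymbol{u},(\boldsymbol{\alpha}_{t_1}(b_1a_1),\boldsymbol{v}_1),\dots,(\boldsymbol{\alpha}_{t_s}(b_sa_s),\boldsymbol{v}_s),\boldsymbol{\alpha}_{t_{s+1}}(b_{s+1}a_{s+1}),\boldsymbol{w}),$$ and the following conditions hold: (i) for every $i\in[1,s]$ with $\boldsymbol{v}_i=\emptyset$, the multisets satisfy $\{\{\alpha_{t_i}(a_ib_i)[t_i],a_{i+1}\}\}\neq\{\{\alpha_{t_i}(b_ia_i)[t_i],b_{i+1}\}\}$; (ii) $d=2(s+1)-|\{i\in[1,s]: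\boldsymbol{v}_i=\emptyset\}|$.
   Context: $\Sigma_q=\{0,1,\dots,q-1\}$; $[i,j]=\{i,\dots,j\}$; $\Sigma_q^{\ge 0}$ is the set of all finite sequences over $\Sigma_q$, including the empty sequence $\emptyset$; $(\cdot,\cdot)$ denotes concatenation. For $\boldsymbol{x}\in\Sigma_q^n$, $x[i]$ is its $i$-th entry, with the convention $x[i]=0$ for $i\notin[1,n]$. The $2$-read vector of $\boldsymbol{x}$ is $\mathcal{R}(\boldsymbol{x})$, the vector of length $n+1$ whose $i$-th entry ($i\in[1,n+1]$) is the multiset $\{\{x[i-1],x[i]\}\}$. $d_H$ is Hamming distance. For distinct $a,b$ and $t\ge 0$, $\boldsymbol{\alpha}_t(ab)$ is the alternating sequence $abab\cdots$ of length $t$; $\alpha_t(ab)[t]$ denotes its last entry. *)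

theory Defs
  imports Main "HOL-Library.Multiset"
begin

text \<open>Sequences over Sigma_q are lists of naturals with all entries < q.
  Entry x[i] is 1-indexed, with x[i] = 0 outside [1,n].\<close>
definition entry :: "nat list \<Rightarrow> int \<Rightarrow> nat" where
  "entry x i = (if 1 \<le> i \<and> i \<le> int (length x) then x ! nat (i - 1) else 0)"

definition read2 :: "nat list \<Rightarrow> nat multiset list" where
  "read2 x = map (\<lambda>i. {# entry x (int i - 1), entry x (int i) #}) [1..<length x + 2]"

definition hamming :: "'a list \<Rightarrow> 'a list \<Rightarrow> nat" where
  "hamming xs ys = card {i. i < length xs \<and> i < length ys \<and> xs ! i \<noteq> ys ! i}"

definition alt :: "nat \<Rightarrow> nat \<Rightarrow> nat \<Rightarrow> nat list" where
  "alt t a b = map (\<lambda>i. if even i then a else b) [0..<t]"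

end

theory Submission
  imports Defs
begin

lemma alt_Suc: "alt (Suc t) a b = a # alt t b a"
  unfolding alt_def upt_conv_Cons[OF zero_less_Suc] map_Suc_upt[symmetric]
  by (simp del: upt_Suc add: comp_def)
lemma alt_nth: "i < t \<Longrightarrow> alt t a b ! i = (if even i then a else b)"
  by (simp add: alt_def)
lemma alt_len[simp]: "length (alt t a b) = t" by (simp add: alt_def)
lemma alt_0[simp]: "alt 0 a b = []" by (simp add: alt_def)
lemma last_alt: "t \<ge> 1 \<Longrightarrow> last (alt t a b) = (if even t then b else a)"
proof -
  assume t: "t \<ge> 1"
  then have "alt t a b \<noteq> []" by (metis alt_len list.size(3) not_one_le_zero)
  then have "last (alt t a b) = alt t a b ! (t - 1)" by (simp add: last_conv_nth)
  also have "\<dots> = (if even (t-1) then a else b)" using t by (simp add: alt_nth)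
  finally show ?thesis using t by auto
qed
lemma ms: "la \<noteq> lb \<Longrightarrow> {#la, e#} = {#lb, f#} \<Longrightarrow> la = f \<and> e = lb"
  by (metis add_mset_eq_single add_mset_remove_trivial diff_union_swap insert_DiffM2)


fun cntp :: "nat \<Rightarrow> nat \<Rightarrow> nat list \<Rightarrow> nat list \<Rightarrow> nat" where
  "cntp p r (x#xs) (y#ys) = (if {#p,x#} \<noteq> {#r,y#} then 1 else 0) + cntp x y xs ys"
| "cntp p r _ _ = 0"

fun rd :: "nat \<Rightarrow> nat list \<Rightarrow> nat multiset list" where
  "rd p [] = [{#p,0#}]"
| "rd p (x#xs) = {#p,x#} # rd x xs"

definition EE :: "nat \<Rightarrow> nat list \<Rightarrow> nat \<Rightarrow> nat" where
  "EE p xs j = (if j = 0 then p else if j \<le> length xs then xs ! (j-1) else 0)"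

lemma rd_len: "length (rd p xs) = Suc (length xs)"
  by (induction xs arbitrary: p) auto

lemma rd_nth: "k \<le> length xs \<Longrightarrow> rd p xs ! k = {#EE p xs k, EE p xs (Suc k)#}"
proof (induction xs arbitrary: p k)
  case Nil then show ?case by (simp add: EE_def)
next
  case (Cons x xs)
  show ?case
  proof (cases k)
    case 0 then show ?thesis by (simp add: EE_def)
  next
    case (Suc k')
    then have "k' \<le> length xs" using Cons.prems by simp
    then show ?thesis using Cons.IH[of k' x] Suc by (auto simp add: EE_def nth_Cons')
  qed
qed

lemma read2_len: "length (read2 x) = Suc (length x)"
  by (simp add: read2_def del: upt_Suc)

lemma read2_rd: "read2 x = rd 0 x"
proof (rule nth_equalityI)
  show "length (read2 x) = length (rd 0 x)" by (simp add: read2_len rd_len)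
next
  fix k assume "k < length (read2 x)"
  then have k: "k \<le> length x" by (simp add: read2_len)
  have e: "entry x (int j) = EE 0 x j" for j
    by (simp add: entry_def EE_def nat_diff_distrib')
  have "read2 x ! k = {# entry x (int (Suc k) - 1), entry x (int (Suc k)) #}"
    using k by (simp add: read2_def nth_map del: upt_Suc)
  also have "\<dots> = {#EE 0 x k, EE 0 x (Suc k)#}"
  proof -
    have "int (Suc k) - 1 = int k" by simp
    then show ?thesis by (simp only: e)
  qed
  finally show "read2 x ! k = rd 0 x ! k" using rd_nth[OF k] by simp
qed

lemma hamming_zip: "hamming xs ys = length (filter (\<lambda>p. fst p \<noteq> snd p) (zip xs ys))"
  unfolding hamming_def length_filter_conv_card by (rule arg_cong[where f=card]) auto

lemma hamming_rd: "length xs = length ys \<Longrightarrow>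
  hamming (rd p xs) (rd r ys) = cntp p r xs ys + (if {#last (p#xs), 0#} \<noteq> {#last (r#ys), 0#} then 1 else 0)"
proof (induction xs arbitrary: p r ys)
  case Nil then show ?case by (simp add: hamming_zip)
next
  case (Cons x xs)
  then obtain y ys' where ys: "ys = y # ys'" by (cases ys) auto
  have h: "hamming (rd p (x#xs)) (rd r (y#ys')) = (if {#p,x#} \<noteq> {#r,y#} then 1 else 0) + hamming (rd x xs) (rd y ys')"
    by (simp add: hamming_zip)
  have l: "length xs = length ys'" using Cons.prems ys by simp
  show ?case unfolding ys h Cons.IH[OF l] by simp
qed

lemma cntp_append: "length xs = length ys \<Longrightarrow>
  cntp p r (xs @ xs') (ys @ ys') = cntp p r xs ys + cntp (last (p#xs)) (last (r#ys)) xs' ys'"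
proof (induction xs arbitrary: p r ys)
  case Nil then show ?case by simp
next
  case (Cons x xs)
  then obtain y ys' where ys: "ys = y # ys'" by (cases ys) auto
  with Cons show ?case by simp
qed

lemma cntp_same: "cntp p p u u = 0"
  by (induction u arbitrary: p) auto

lemma cntp_alt0: "cntp a b (alt t b a) (alt t a b) = 0"
  by (induction t arbitrary: a b) (auto simp: alt_Suc add_mset_commute)

lemma cntp_alt: "t \<ge> 1 \<Longrightarrow> cntp p r (alt t a b) (alt t b a) = (if {#p,a#} \<noteq> {#r,b#} then 1 else 0)"
  by (cases t) (auto simp: alt_Suc cntp_alt0)

lemma cntp_v: "c \<noteq> c' \<Longrightarrow> v \<noteq> [] \<Longrightarrow> cntp c c' (v @ xs) (v @ ys) = 1 + cntp (last v) (last v) xs ys"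
proof -
  assume c: "c \<noteq> c'" and v: "v \<noteq> []"
  then obtain z zs where vz: "v = z # zs" by (cases v) auto
  have "cntp c c' (v @ xs) (v @ ys) = cntp c c' v v + cntp (last (c#v)) (last (c'#v)) xs ys"
    by (rule cntp_append) simp
  moreover have "cntp c c' v v = 1" using c vz by (simp add: cntp_same)
  ultimately show ?thesis using v by simp
qed



definition FX :: "(nat\<Rightarrow>nat) \<Rightarrow> (nat\<Rightarrow>nat list) \<Rightarrow> (nat\<Rightarrow>nat) \<Rightarrow> (nat\<Rightarrow>nat) \<Rightarrow> nat \<Rightarrow> nat list" where
  "FX t v a b i = alt (t i) (a i) (b i) @ v i"

lemma len_concat_FX: "length (concat (map (FX t v a b) L)) = length (concat (map (FX t v b a) L))"
  by (induction L) (auto simp: FX_def)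

lemma soundA:
  assumes "\<forall>i\<in>{1..s+1}. t i \<ge> 1 \<and> a i \<noteq> b i"
    and "\<forall>i\<in>{1..s}. v i = [] \<longrightarrow>
          {# last (alt (t i) (a i) (b i)), a (i+1) #} \<noteq> {# last (alt (t i) (b i) (a i)), b (i+1) #}"
  shows "cntp p p (concat (map (FX t v a b) [1..<s+1]) @ alt (t (s+1)) (a (s+1)) (b (s+1)))
                  (concat (map (FX t v b a) [1..<s+1]) @ alt (t (s+1)) (b (s+1)) (a (s+1)))
         = 1 + (\<Sum>i\<in>{1..s}. if v i = [] then 1 else 2)"
  using assms
proof (induction s)
  case 0
  have "t 1 \<ge> 1" "a 1 \<noteq> b 1" using "0.prems" by auto
  then show ?case by (simp add: cntp_alt)
next
  case (Suc s)
  let ?Cx = "concat (map (FX t v a b) [1..<s+1]) @ alt (t (s+1)) (a (s+1)) (b (s+1))"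
  let ?Cy = "concat (map (FX t v b a) [1..<s+1]) @ alt (t (s+1)) (b (s+1)) (a (s+1))"
  have IH: "cntp p p ?Cx ?Cy = 1 + (\<Sum>i\<in>{1..s}. if v i = [] then 1 else 2)"
    using Suc by auto
  have ts: "t (s+1) \<ge> 1" "a (s+1) \<noteq> b (s+1)" "t (s+2) \<ge> 1" "a (s+2) \<noteq> b (s+2)"
    using Suc.prems(1) by auto
  have ex: "concat (map (FX t v a b) [1..<Suc s+1]) @ alt (t (Suc s+1)) (a (Suc s+1)) (b (Suc s+1))
     = ?Cx @ (v (s+1) @ alt (t (s+2)) (a (s+2)) (b (s+2)))" by (simp add: FX_def)
  have ey: "concat (map (FX t v b a) [1..<Suc s+1]) @ alt (t (Suc s+1)) (b (Suc s+1)) (a (Suc s+1))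
     = ?Cy @ (v (s+1) @ alt (t (s+2)) (b (s+2)) (a (s+2)))" by (simp add: FX_def)
  have len: "length ?Cx = length ?Cy" using len_concat_FX[of t v a b] by simp
  have lx: "last (p # ?Cx) = last (alt (t (s+1)) (a (s+1)) (b (s+1)))"
    using ts(1) by (cases "t (s+1)") (auto simp: alt_Suc)
  have ly: "last (p # ?Cy) = last (alt (t (s+1)) (b (s+1)) (a (s+1)))"
    using ts(1) by (cases "t (s+1)") (auto simp: alt_Suc)
  have lneq: "last (alt (t (s+1)) (a (s+1)) (b (s+1))) \<noteq> last (alt (t (s+1)) (b (s+1)) (a (s+1)))"
    using ts(1,2) by (simp add: last_alt)
  have tail: "cntp (last (alt (t (s+1)) (a (s+1)) (b (s+1)))) (last (alt (t (s+1)) (b (s+1)) (a (s+1))))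
      (v (s+1) @ alt (t (s+2)) (a (s+2)) (b (s+2))) (v (s+1) @ alt (t (s+2)) (b (s+2)) (a (s+2)))
      = (if v (Suc s) = [] then 1 else 2)"
  proof (cases "v (s+1) = []")
    case True
    have "s + 1 \<in> {1..Suc s}" by simp
    then have c: "{# last (alt (t (s+1)) (a (s+1)) (b (s+1))), a (s+2) #} \<noteq> {# last (alt (t (s+1)) (b (s+1)) (a (s+1))), b (s+2) #}"
    proof -
      have e2: "s+1+1 = s+2" by simp
      have m: "s + 1 \<in> {1..Suc s}" by simp
      show ?thesis using Suc.prems(2)[rule_format, OF m True] unfolding e2 .
    qed
    show ?thesis using True c ts(3) by (simp add: cntp_alt)
  next
    case False
    show ?thesis using False lneq ts(3,4) by (simp add: cntp_v cntp_alt)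
  qed
  show ?case
    unfolding ex ey cntp_append[OF len] IH lx ly tail
    by (simp add: sum.cl_ivl_Suc)
qed

lemma sum_card: "(\<Sum>i\<in>{1..s}. if v i = [] then 1 else 2) + card {i\<in>{1..s}. v i = []} = 2 * (s::nat)"
proof (induction s)
  case 0 then show ?case by simp
next
  case (Suc s)
  have "{i\<in>{1..Suc s}. v i = []} = (if v (Suc s) = [] then insert (Suc s) {i\<in>{1..s}. v i = []} else {i\<in>{1..s}. v i = []})"
    by (auto simp: le_Suc_eq)
  then show ?case using Suc by (simp add: sum.cl_ivl_Suc)
qed



lemma hamming_decomp:
  assumes ab: "\<forall>i\<in>{1..s+1}. t i \<ge> 1 \<and> a i \<noteq> b i"
    and cond: "\<forall>i\<in>{1..s}. v i = [] \<longrightarrow>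
          {# last (alt (t i) (a i) (b i)), a (i+1) #} \<noteq> {# last (alt (t i) (b i) (a i)), b (i+1) #}"
    and xd: "x = u @ concat (map (\<lambda>i. alt (t i) (a i) (b i) @ v i) [1..<s+1])
             @ alt (t (s+1)) (a (s+1)) (b (s+1)) @ w"
    and yd: "y = u @ concat (map (\<lambda>i. alt (t i) (b i) (a i) @ v i) [1..<s+1])
             @ alt (t (s+1)) (b (s+1)) (a (s+1)) @ w"
  shows "hamming (read2 x) (read2 y) = 2 * (s+1) - card {i\<in>{1..s}. v i = []}"
proof -
  have fa: "(\<lambda>i. alt (t i) (a i) (b i) @ v i) = FX t v a b" by (simp add: FX_def fun_eq_iff)
  have fb: "(\<lambda>i. alt (t i) (b i) (a i) @ v i) = FX t v b a" by (simp add: FX_def fun_eq_iff)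
  let ?Cx = "concat (map (FX t v a b) [1..<s+1]) @ alt (t (s+1)) (a (s+1)) (b (s+1))"
  let ?Cy = "concat (map (FX t v b a) [1..<s+1]) @ alt (t (s+1)) (b (s+1)) (a (s+1))"
  have x: "x = u @ (?Cx @ w)" using xd fa by simp
  have y: "y = u @ (?Cy @ w)" using yd fb by simp
  have ts: "t (s+1) \<ge> 1" "a (s+1) \<noteq> b (s+1)" using ab by auto
  have len: "length ?Cx = length ?Cy" using len_concat_FX[of t v a b] by simp
  let ?L = "last (0 # u)"
  let ?lx = "last (alt (t (s+1)) (a (s+1)) (b (s+1)))"
  let ?ly = "last (alt (t (s+1)) (b (s+1)) (a (s+1)))"
  have lx: "last (?L # ?Cx) = ?lx"
    using ts(1) by (cases "t (s+1)") (auto simp: alt_Suc)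
  have ly: "last (?L # ?Cy) = ?ly"
    using ts(1) by (cases "t (s+1)") (auto simp: alt_Suc)
  have lneq: "?lx \<noteq> ?ly" using ts by (simp add: last_alt)
  have lenxy: "length x = length y" using x y len by simp
  have S: "cntp ?L ?L ?Cx ?Cy = 1 + (\<Sum>i\<in>{1..s}. if v i = [] then 1 else 2)"
    by (rule soundA[OF ab cond])
  have c1: "cntp 0 0 x y = cntp ?L ?L ?Cx ?Cy + cntp ?lx ?ly w w"
    unfolding x y cntp_append[OF refl] cntp_same cntp_append[OF len] lx ly by simp
  have fin: "cntp ?lx ?ly w w + (if {#last (0#x), 0#} \<noteq> {#last (0#y), 0#} then 1 else 0) = 1"
  proof (cases "w = []")
    case True
    have ane: "alt (t (s+1)) (a (s+1)) (b (s+1)) \<noteq> []" "alt (t (s+1)) (b (s+1)) (a (s+1)) \<noteq> []"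
      using ts(1) by (metis alt_len list.size(3) not_one_le_zero)+
    have "x = (u @ concat (map (FX t v a b) [1..<s+1])) @ alt (t (s+1)) (a (s+1)) (b (s+1))"
      using x True by simp
    then have "last (0#x) = ?lx" using ane(1) by (simp only: last_ConsR last_appendR) simp
    moreover have "y = (u @ concat (map (FX t v b a) [1..<s+1])) @ alt (t (s+1)) (b (s+1)) (a (s+1))"
      using y True by simp
    then have "last (0#y) = ?ly" using ane(2) by (simp only: last_ConsR last_appendR) simp
    ultimately show ?thesis using True lneq by simp
  next
    case False
    have "last (0#x) = last w" "last (0#y) = last w" using x y False by simp_all
    moreover have "cntp ?lx ?ly w w = 1" using cntp_v[OF lneq False, of "[]" "[]"] False by simp
    ultimately show ?thesis by simp
  qed
  have "hamming (read2 x) (read2 y) = cntp 0 0 x y + (if {#last (0#x), 0#} \<noteq> {#last (0#y), 0#} then 1 else 0)"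
    unfolding read2_rd by (rule hamming_rd[OF lenxy])
  also have "\<dots> = 2 + (\<Sum>i\<in>{1..s}. if v i = [] then 1 else 2)" using c1 S fin by simp
  also have "\<dots> = 2 * (s+1) - card {i\<in>{1..s}. v i = []}" using sum_card[of v s] by simp
  finally show ?thesis .
qed



definition decomp :: "nat list \<Rightarrow> nat list \<Rightarrow> nat \<Rightarrow> (nat\<Rightarrow>nat) \<Rightarrow> nat list \<Rightarrow> nat list \<Rightarrow> (nat \<Rightarrow> nat list) \<Rightarrow> (nat\<Rightarrow>nat) \<Rightarrow> (nat\<Rightarrow>nat) \<Rightarrow> bool" where
  "decomp x y s t u w v a b \<longleftrightarrow> (\<forall>i\<in>{1..s+1}. t i \<ge> 1 \<and> a i \<noteq> b i) \<and>
       x = u @ concat (map (\<lambda>i. alt (t i) (a i) (b i) @ v i) [1..<s+1])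
             @ alt (t (s+1)) (a (s+1)) (b (s+1)) @ w \<and>
       y = u @ concat (map (\<lambda>i. alt (t i) (b i) (a i) @ v i) [1..<s+1])
             @ alt (t (s+1)) (b (s+1)) (a (s+1)) @ w \<and>
       (\<forall>i\<in>{1..s}. v i = [] \<longrightarrow>
          {# last (alt (t i) (a i) (b i)), a (i+1) #} \<noteq> {# last (alt (t i) (b i) (a i)), b (i+1) #})"

fun altlen :: "nat \<Rightarrow> nat \<Rightarrow> nat list \<Rightarrow> nat list \<Rightarrow> nat" where
  "altlen a b (x#xs) (y#ys) = (if x = a \<and> y = b then Suc (altlen b a xs ys) else 0)"
| "altlen a b _ _ = 0"

lemma altlen_prop: "length xs = length ys \<Longrightarrow> k = altlen a b xs ys \<Longrightarrow>
   k \<le> length xs \<and> take k xs = alt k a b \<and> take k ys = alt k b a \<and>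
   (k < length xs \<longrightarrow> \<not> (xs!k = (if even k then a else b) \<and> ys!k = (if even k then b else a)))"
proof (induction xs arbitrary: a b ys k)
  case Nil then show ?case by simp
next
  case (Cons x xs)
  then obtain y ys' where ys: "ys = y # ys'" by (cases ys) auto
  show ?case
  proof (cases "x = a \<and> y = b")
    case True
    then have k: "k = Suc (altlen b a xs ys')" using Cons.prems ys by simp
    have l: "length xs = length ys'" using Cons.prems ys by simp
    note IH = Cons.IH[OF l refl, of b a]
    show ?thesis using IH True unfolding k ys by (auto simp: alt_Suc)
  next
    case False
    then have k: "k = 0" using Cons.prems ys by simp
    show ?thesis using False unfolding k ys by simp
  qed
qed

lemma decomp_hd: "decomp x y s t [] w v a b \<Longrightarrow> x \<noteq> [] \<and> hd x = a 1 \<and> y \<noteq> [] \<and> hd y = b 1"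
proof -
  assume d: "decomp x y s t [] w v a b"
  have t1: "t 1 \<ge> 1" using d by (auto simp: decomp_def)
  then obtain t' where t': "t 1 = Suc t'" by (cases "t 1") auto
  have xr: "\<exists>r r'. x = alt (t 1) (a 1) (b 1) @ r \<and> y = alt (t 1) (b 1) (a 1) @ r'"
  proof (cases s)
    case 0
    then show ?thesis using d by (simp add: decomp_def)
  next
    case (Suc s')
    have e: "[1..<s+1] = 1 # [Suc 1..<s+1]" by (rule upt_conv_Cons) (simp add: Suc)
    have "x = ((alt (t 1) (a 1) (b 1) @ v 1) @ concat (map (\<lambda>i. alt (t i) (a i) (b i) @ v i) [Suc 1..<s+1]))
             @ alt (t (s+1)) (a (s+1)) (b (s+1)) @ w"
         "y = ((alt (t 1) (b 1) (a 1) @ v 1) @ concat (map (\<lambda>i. alt (t i) (b i) (a i) @ v i) [Suc 1..<s+1]))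
             @ alt (t (s+1)) (b (s+1)) (a (s+1)) @ w"
      using d unfolding decomp_def e by (simp_all only: list.map concat.simps append_Nil)
    then show ?thesis by simp
  qed
  then show ?thesis using t' by (auto simp: alt_Suc)
qed

lemma cond_lemma: "k \<ge> 1 \<Longrightarrow> c \<noteq> d \<Longrightarrow> \<not> (e = (if even k then c else d) \<and> f = (if even k then d else c))
  \<Longrightarrow> {#last (alt k c d), e#} \<noteq> {#last (alt k d c), f#}"
proof
  assume k: "k \<ge> 1" and cd: "c \<noteq> d" and ne: "\<not> (e = (if even k then c else d) \<and> f = (if even k then d else c))"
    and eq: "{#last (alt k c d), e#} = {#last (alt k d c), f#}"
  have l1: "last (alt k c d) = (if even k then d else c)" "last (alt k d c) = (if even k then c else d)"
    using k by (simp_all add: last_alt)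
  have "last (alt k c d) \<noteq> last (alt k d c)" using l1 cd by simp
  from ms[OF this eq] show False using l1 ne by (cases "even k") auto
qed

definition sh :: "'a \<Rightarrow> (nat \<Rightarrow> 'a) \<Rightarrow> nat \<Rightarrow> 'a" where
  "sh z f i = (if i = 1 then z else f (i - 1))"

lemma concat_sh: "concat (map (\<lambda>i. alt (sh k t i) (sh c a i) (sh d b i) @ sh u v i) [1..<Suc s+1])
   = (alt k c d @ u) @ concat (map (\<lambda>i. alt (t i) (a i) (b i) @ v i) [1..<s+1])"
proof -
  have "[1..<Suc s+1] = 1 # map Suc [1..<s+1]" by (simp add: upt_conv_Cons map_Suc_upt del: upt_Suc)
  moreover have "map (\<lambda>i. alt (sh k t i) (sh c a i) (sh d b i) @ sh u v i) (map Suc [1..<s+1])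
     = map (\<lambda>i. alt (t i) (a i) (b i) @ v i) [1..<s+1]"
    unfolding map_map by (rule map_cong) (auto simp: sh_def)
  ultimately show ?thesis by (simp only: list.map concat.simps) (simp add: sh_def)
qed

lemma decomp_exists: "length x = length y \<Longrightarrow> x \<noteq> y \<Longrightarrow> \<exists>s t u w v a b. decomp x y s t u w v a b"
proof (induction "length x" arbitrary: x y rule: less_induct)
  case less
  obtain c xs where x: "x = c # xs" using less.prems by (cases x) auto
  obtain d ys where y: "y = d # ys" using less.prems x by (cases y) auto
  show ?case
  proof (cases "c = d")
    case True
    then have "xs \<noteq> ys" "length xs = length ys" using less.prems x y by auto
    then obtain s t u w v a b where "decomp xs ys s t u w v a b" using less.hyps[of xs ys] x by auto
    then have "decomp x y s t (c#u) w v a b" using x y True by (simp add: decomp_def)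
    then show ?thesis by blast
  next
    case False
    define k where "k = altlen c d x y"
    have P: "k \<le> length x \<and> take k x = alt k c d \<and> take k y = alt k d c \<and>
      (k < length x \<longrightarrow> \<not> (x!k = (if even k then c else d) \<and> y!k = (if even k then d else c)))"
      using altlen_prop[OF less.prems(1) k_def] .
    have k1: "k \<ge> 1" unfolding k_def using x y by simp
    have xk: "x = alt k c d @ drop k x" using P by (metis append_take_drop_id)
    have yk: "y = alt k d c @ drop k y" using P by (metis append_take_drop_id)
    show ?thesis
    proof (cases "drop k x = drop k y")
      case True
      have "decomp x y 0 (\<lambda>_. k) [] (drop k x) (\<lambda>_. []) (\<lambda>_. c) (\<lambda>_. d)"
        unfolding decomp_def using k1 False xk yk True by simp
      then show ?thesis by blast
    next
      case dne: False
      have ln: "length (drop k x) = length (drop k y)" "length (drop k x) < length x"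
        using less.prems(1) k1 P by auto
      obtain s t u w v a b where D: "decomp (drop k x) (drop k y) s t u w v a b"
        using less.hyps[OF ln(2) ln(1) dne] by blast
      have Dab: "\<forall>i\<in>{1..s+1}. t i \<ge> 1 \<and> a i \<noteq> b i"
        and Dx: "drop k x = u @ concat (map (\<lambda>i. alt (t i) (a i) (b i) @ v i) [1..<s+1])
             @ alt (t (s+1)) (a (s+1)) (b (s+1)) @ w"
        and Dy: "drop k y = u @ concat (map (\<lambda>i. alt (t i) (b i) (a i) @ v i) [1..<s+1])
             @ alt (t (s+1)) (b (s+1)) (a (s+1)) @ w"
        and Dc: "\<forall>i\<in>{1..s}. v i = [] \<longrightarrow>
          {# last (alt (t i) (a i) (b i)), a (i+1) #} \<noteq> {# last (alt (t i) (b i) (a i)), b (i+1) #}"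
        using D unfolding decomp_def by blast+
      have c1: "\<forall>i\<in>{1..Suc s+1}. sh k t i \<ge> 1 \<and> sh c a i \<noteq> sh d b i"
      proof
        fix i assume i: "i \<in> {1..Suc s+1}"
        show "sh k t i \<ge> 1 \<and> sh c a i \<noteq> sh d b i"
        proof (cases "i = 1")
          case True then show ?thesis using k1 False by (simp add: sh_def)
        next
          case ne: False
          then have "i - 1 \<in> {1..s+1}" using i by auto
          then show ?thesis using Dab ne by (simp add: sh_def)
        qed
      qed
      have lastsh: "sh k t (Suc s+1) = t (s+1)" "sh c a (Suc s+1) = a (s+1)" "sh d b (Suc s+1) = b (s+1)"
        by (simp_all add: sh_def)
      have c2: "x = [] @ concat (map (\<lambda>i. alt (sh k t i) (sh c a i) (sh d b i) @ sh u v i) [1..<Suc s+1])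
             @ alt (sh k t (Suc s+1)) (sh c a (Suc s+1)) (sh d b (Suc s+1)) @ w"
        unfolding concat_sh lastsh using xk Dx by simp
      have c3: "y = [] @ concat (map (\<lambda>i. alt (sh k t i) (sh d b i) (sh c a i) @ sh u v i) [1..<Suc s+1])
             @ alt (sh k t (Suc s+1)) (sh d b (Suc s+1)) (sh c a (Suc s+1)) @ w"
        unfolding concat_sh lastsh using yk Dy by simp
      have c4: "\<forall>i\<in>{1..Suc s}. sh u v i = [] \<longrightarrow>
          {# last (alt (sh k t i) (sh c a i) (sh d b i)), sh c a (i+1) #} \<noteq> {# last (alt (sh k t i) (sh d b i) (sh c a i)), sh d b (i+1) #}"
      proof (intro ballI impI)
        fix i assume i: "i \<in> {1..Suc s}" and vi: "sh u v i = []"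
        show "{# last (alt (sh k t i) (sh c a i) (sh d b i)), sh c a (i+1) #} \<noteq> {# last (alt (sh k t i) (sh d b i) (sh c a i)), sh d b (i+1) #}"
        proof (cases "i = 1")
          case True
          then have u0: "u = []" using vi by (simp add: sh_def)
          then have "decomp (drop k x) (drop k y) s t [] w v a b" using D by simp
          from decomp_hd[OF this] have h: "drop k x \<noteq> []" "hd (drop k x) = a 1" "hd (drop k y) = b 1" by auto
          have kl: "k < length x" using h(1) by simp
          have "x ! k = a 1" "y ! k = b 1" using h kl less.prems(1) by (simp_all add: hd_drop_conv_nth)
          then have "\<not> (a 1 = (if even k then c else d) \<and> b 1 = (if even k then d else c))" using P kl by auto
          from cond_lemma[OF k1 False this] show ?thesis using True by (simp add: sh_def)
        next
          case ne: False
          then have m: "i - 1 \<in> {1..s}" using i by auto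
          have e: "i - 1 + 1 = i" using ne i by auto
          have i0: "i \<noteq> 0" using i by auto
          have "v (i-1) = []" using vi ne by (simp add: sh_def)
          from Dc[rule_format, OF m this] show ?thesis using ne i0 unfolding e by (simp add: sh_def)
        qed
      qed
      have "decomp x y (Suc s) (sh k t) [] w (sh u v) (sh c a) (sh d b)"
        unfolding decomp_def using c1 c2 c3 c4 by blast
      then show ?thesis by blast
    qed
  qed
qed



lemma decomp_sets:
  assumes D: "decomp x y s t u w v a b"
  shows "set u \<subseteq> set x" "set w \<subseteq> set x" "\<forall>i\<in>{1..s}. set (v i) \<subseteq> set x"
    "\<forall>i\<in>{1..s+1}. a i \<in> set x \<and> b i \<in> set y"
proof -
  have ab: "\<forall>i\<in>{1..s+1}. t i \<ge> 1 \<and> a i \<noteq> b i"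
    and x: "x = u @ concat (map (\<lambda>i. alt (t i) (a i) (b i) @ v i) [1..<s+1])
             @ alt (t (s+1)) (a (s+1)) (b (s+1)) @ w"
    and y: "y = u @ concat (map (\<lambda>i. alt (t i) (b i) (a i) @ v i) [1..<s+1])
             @ alt (t (s+1)) (b (s+1)) (a (s+1)) @ w"
    using D unfolding decomp_def by blast+
  show "set u \<subseteq> set x" "set w \<subseteq> set x" using x by auto
  show "\<forall>i\<in>{1..s}. set (v i) \<subseteq> set x"
  proof
    fix i assume i: "i \<in> {1..s}"
    then have "i \<in> set [1..<s+1]" by auto
    then show "set (v i) \<subseteq> set x" using x by auto
  qed
  have mem: "p \<in> set (alt tt p r)" if "tt \<ge> 1" for tt p r
    using that by (cases tt) (auto simp: alt_Suc)
  show "\<forall>i\<in>{1..s+1}. a i \<in> set x \<and> b i \<in> set y"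
  proof
    fix i assume i: "i \<in> {1..s+1}"
    have ti: "t i \<ge> 1" using ab i by auto
    show "a i \<in> set x \<and> b i \<in> set y"
    proof (cases "i = s+1")
      case True
      then show ?thesis using x y mem[OF ti] by auto
    next
      case False
      then have "i \<in> set [1..<s+1]" using i by auto
      then show ?thesis using x y mem[OF ti] by fastforce
    qed
  qed
qed

theorem theorem2:
  fixes q n d :: nat and x y :: "nat list"
  assumes "q \<ge> 2" and "n \<ge> 1" and "d \<ge> 2"
    and "length x = n" and "length y = n"
    and "set x \<subseteq> {..<q}" and "set y \<subseteq> {..<q}"
    and "x \<noteq> y"
  shows "hamming (read2 x) (read2 y) = d \<longleftrightarrow>
    (\<exists>(s::nat) (t::nat \<Rightarrow> nat) (u::nat list) (w::nat list) (v::nat \<Rightarrow> nat list)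
       (a::nat \<Rightarrow> nat) (b::nat \<Rightarrow> nat).
       (\<forall>i\<in>{1..s+1}. t i \<ge> 1) \<and>
       set u \<subseteq> {..<q} \<and> set w \<subseteq> {..<q} \<and> (\<forall>i\<in>{1..s}. set (v i) \<subseteq> {..<q}) \<and>
       (\<forall>i\<in>{1..s+1}. a i < q \<and> b i < q \<and> a i \<noteq> b i) \<and>
       x = u @ concat (map (\<lambda>i. alt (t i) (a i) (b i) @ v i) [1..<s+1])
             @ alt (t (s+1)) (a (s+1)) (b (s+1)) @ w \<and>
       y = u @ concat (map (\<lambda>i. alt (t i) (b i) (a i) @ v i) [1..<s+1])
             @ alt (t (s+1)) (b (s+1)) (a (s+1)) @ w \<and>
       (\<forall>i\<in>{1..s}. v i = [] \<longrightarrow>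
          {# last (alt (t i) (a i) (b i)), a (i+1) #} \<noteq> {# last (alt (t i) (b i) (a i)), b (i+1) #}) \<and>
       d = 2 * (s+1) - card {i\<in>{1..s}. v i = []})"
proof
  assume h: "hamming (read2 x) (read2 y) = d"
  have len: "length x = length y" using assms by simp
  obtain s t u w v a b where D: "decomp x y s t u w v a b"
    using decomp_exists[OF len assms(8)] by blast
  have ab: "\<forall>i\<in>{1..s+1}. t i \<ge> 1 \<and> a i \<noteq> b i"
    and xd: "x = u @ concat (map (\<lambda>i. alt (t i) (a i) (b i) @ v i) [1..<s+1])
             @ alt (t (s+1)) (a (s+1)) (b (s+1)) @ w"
    and yd: "y = u @ concat (map (\<lambda>i. alt (t i) (b i) (a i) @ v i) [1..<s+1])
             @ alt (t (s+1)) (b (s+1)) (a (s+1)) @ w"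
    and cd: "\<forall>i\<in>{1..s}. v i = [] \<longrightarrow>
          {# last (alt (t i) (a i) (b i)), a (i+1) #} \<noteq> {# last (alt (t i) (b i) (a i)), b (i+1) #}"
    using D unfolding decomp_def by blast+
  have hd: "hamming (read2 x) (read2 y) = 2 * (s+1) - card {i\<in>{1..s}. v i = []}"
    by (rule hamming_decomp[OF ab cd xd yd])
  note S = decomp_sets[OF D]
  have a1: "set u \<subseteq> {..<q}" "set w \<subseteq> {..<q}" using S(1,2) assms(6) by auto
  have a2: "\<forall>i\<in>{1..s}. set (v i) \<subseteq> {..<q}" using S(3) assms(6) by blast
  have a3: "\<forall>i\<in>{1..s+1}. a i < q \<and> b i < q \<and> a i \<noteq> b i" using S(4) ab assms(6,7) by blast
  have a0: "\<forall>i\<in>{1..s+1}. t i \<ge> 1" using ab by blast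
  show "\<exists>(s::nat) (t::nat \<Rightarrow> nat) (u::nat list) (w::nat list) (v::nat \<Rightarrow> nat list)
       (a::nat \<Rightarrow> nat) (b::nat \<Rightarrow> nat).
       (\<forall>i\<in>{1..s+1}. t i \<ge> 1) \<and>
       set u \<subseteq> {..<q} \<and> set w \<subseteq> {..<q} \<and> (\<forall>i\<in>{1..s}. set (v i) \<subseteq> {..<q}) \<and>
       (\<forall>i\<in>{1..s+1}. a i < q \<and> b i < q \<and> a i \<noteq> b i) \<and>
       x = u @ concat (map (\<lambda>i. alt (t i) (a i) (b i) @ v i) [1..<s+1])
             @ alt (t (s+1)) (a (s+1)) (b (s+1)) @ w \<and>
       y = u @ concat (map (\<lambda>i. alt (t i) (b i) (a i) @ v i) [1..<s+1])
             @ alt (t (s+1)) (b (s+1)) (a (s+1)) @ w \<and>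
       (\<forall>i\<in>{1..s}. v i = [] \<longrightarrow>
          {# last (alt (t i) (a i) (b i)), a (i+1) #} \<noteq> {# last (alt (t i) (b i) (a i)), b (i+1) #}) \<and>
       d = 2 * (s+1) - card {i\<in>{1..s}. v i = []}"
    using a0 a1 a2 a3 xd yd cd h hd by blast
next
  assume "\<exists>(s::nat) (t::nat \<Rightarrow> nat) (u::nat list) (w::nat list) (v::nat \<Rightarrow> nat list)
       (a::nat \<Rightarrow> nat) (b::nat \<Rightarrow> nat).
       (\<forall>i\<in>{1..s+1}. t i \<ge> 1) \<and>
       set u \<subseteq> {..<q} \<and> set w \<subseteq> {..<q} \<and> (\<forall>i\<in>{1..s}. set (v i) \<subseteq> {..<q}) \<and>
       (\<forall>i\<in>{1..s+1}. a i < q \<and> b i < q \<and> a i \<noteq> b i) \<and>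
       x = u @ concat (map (\<lambda>i. alt (t i) (a i) (b i) @ v i) [1..<s+1])
             @ alt (t (s+1)) (a (s+1)) (b (s+1)) @ w \<and>
       y = u @ concat (map (\<lambda>i. alt (t i) (b i) (a i) @ v i) [1..<s+1])
             @ alt (t (s+1)) (b (s+1)) (a (s+1)) @ w \<and>
       (\<forall>i\<in>{1..s}. v i = [] \<longrightarrow>
          {# last (alt (t i) (a i) (b i)), a (i+1) #} \<noteq> {# last (alt (t i) (b i) (a i)), b (i+1) #}) \<and>
       d = 2 * (s+1) - card {i\<in>{1..s}. v i = []}"
  then obtain s t u w v a b where
    t1: "\<forall>i\<in>{1..s+1}. t i \<ge> 1" and
    ab: "\<forall>i\<in>{1..s+1}. a i < q \<and> b i < q \<and> a i \<noteq> b i" and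
    xd: "x = u @ concat (map (\<lambda>i. alt (t i) (a i) (b i) @ v i) [1..<s+1])
             @ alt (t (s+1)) (a (s+1)) (b (s+1)) @ w" and
    yd: "y = u @ concat (map (\<lambda>i. alt (t i) (b i) (a i) @ v i) [1..<s+1])
             @ alt (t (s+1)) (b (s+1)) (a (s+1)) @ w" and
    cd: "\<forall>i\<in>{1..s}. v i = [] \<longrightarrow>
          {# last (alt (t i) (a i) (b i)), a (i+1) #} \<noteq> {# last (alt (t i) (b i) (a i)), b (i+1) #}" and
    dd: "d = 2 * (s+1) - card {i\<in>{1..s}. v i = []}"
    by blast
  have ab': "\<forall>i\<in>{1..s+1}. t i \<ge> 1 \<and> a i \<noteq> b i" using t1 ab by blast
  show "hamming (read2 x) (read2 y) = d"
    using hamming_decomp[OF ab' cd xd yd] dd by simp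
qed

end
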